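(* Let $\mathbb{S}^{D-1}$ be the unit sphere of $\mathbb{R}^D$ and take $\mathcal{X}=\mathbb{S}^{D-1}$. For any finite nonempty $\mathcal{X}_0\subseteq\mathbb{S}^{D-1}$, $F_\infty(\mathcal{X}_0)=1/\cos\gamma(\pm\mathcal{X}_0)$, where $\pm\mathcal{X}_0=\{\pm\boldsymbol{v}:\boldsymbol{v}\in\mathcal{X}_0\}$.
   Context: For $\boldsymbol{x}\in\mathbb{R}^D$ and finite $\mathcal{X}_0=\{\boldsymbol{v}_1,\dots,\boldsymbol{v}_m\}$, $f_\infty(\boldsymbol{x},\mathcal{X}_0):=\min_{\boldsymbol{c}\in\mathbb{R}^m}\|\boldsymbol{c}\|_1$ subject to $\boldsymbol{x}=\sum_{i}c_i\boldsymbol{v}_i$, with value $+\infty$ if infeasible; $F_\infty(\mathcal{X}_0):=\sup_{\boldsymbol{x}\in\mathbb{S}^{D-1}}f_\infty(\boldsymbol{x},\mathcal{X}_0)$. The covering radius of $\mathcal{V}\subseteq\mathbb{S}^{D-1}$ is $\gamma(\mathcal{V}):=\max_{\boldsymbol{w}\in\mathbb{S}^{D-1}}\min_{\boldsymbol{v}\in\mathcal{V}}\cos^{-1}\langle\boldsymbol{v},\boldsymbol{w}\rangle$. Convention: $1/0=+\infty$. *)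

theory Defs
  imports "HOL-Analysis.Analysis" "HOL-Library.Extended_Real"
begin

text \<open>f_infinity(x, X0): minimal l1-norm of coefficients representing x as a linear
  combination of the (distinct) elements of the finite set X0; +infinity if infeasible
  (Inf of the empty set of extended reals is +infinity).\<close>
definition f_inf :: "'a::euclidean_space \<Rightarrow> 'a set \<Rightarrow> ereal" where
  "f_inf x X0 = Inf {ereal (\<Sum>v\<in>X0. \<bar>c v\<bar>) | c :: 'a \<Rightarrow> real. x = (\<Sum>v\<in>X0. c v *\<^sub>R v)}"

definition F_inf :: "'a::euclidean_space set \<Rightarrow> ereal" where
  "F_inf X0 = (SUP x\<in>sphere 0 1. f_inf x X0)"

definition covering_radius :: "'a::euclidean_space set \<Rightarrow> real" where
  "covering_radius V = (SUP w\<in>sphere 0 1. Min ((\<lambda>v. arccos (v \<bullet> w)) ` V))"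

definition inv_ereal :: "real \<Rightarrow> ereal" where
  "inv_ereal t = (if t = 0 then \<infinity> else ereal (1 / t))"

end

theory Submission
  imports Defs
begin

lemma repr_hull:
  fixes X0 :: "'a::euclidean_space set"
  assumes fin: "finite X0" and y: "y \<in> convex hull (X0 \<union> uminus ` X0)"
  shows "\<exists>c. y = (\<Sum>v\<in>X0. c v *\<^sub>R v) \<and> (\<Sum>v\<in>X0. \<bar>c v\<bar>) \<le> 1"
proof -
  let ?V = "X0 \<union> uminus ` X0"
  have finV: "finite ?V" using fin by simp
  obtain u where u0: "\<forall>x\<in>?V. 0 \<le> u x" and u1: "sum u ?V = 1"
    and uy: "(\<Sum>x\<in>?V. u x *\<^sub>R x) = y"
    using y unfolding convex_hull_finite[OF finV] by blast
  define P where "P = {v\<in>X0. - v \<notin> X0}"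
  define W where "W = uminus ` P"
  have VW: "?V = X0 \<union> W" unfolding W_def P_def by auto
  have disj: "X0 \<inter> W = {}" unfolding W_def P_def by auto
  have finW: "finite W" unfolding W_def P_def using fin by simp
  have finP: "finite P" unfolding P_def using fin by simp
  have injP: "inj_on uminus P" by (simp add: inj_on_def)
  define c where "c v = u v - (if - v \<notin> X0 then u (- v) else 0)" for v
  have sW: "(\<Sum>x\<in>W. u x *\<^sub>R x) = (\<Sum>v\<in>X0. (if - v \<notin> X0 then u (- v) else 0) *\<^sub>R (- v))"
  proof -
    have "(\<Sum>x\<in>W. u x *\<^sub>R x) = (\<Sum>v\<in>P. u (- v) *\<^sub>R (- v))"
      unfolding W_def using sum.reindex[OF injP, of "\<lambda>x. u x *\<^sub>R x"] by simp
    also have "\<dots> = (\<Sum>v\<in>X0. if - v \<notin> X0 then u (- v) *\<^sub>R (- v) else 0)"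
      unfolding P_def by (rule sum.inter_filter[OF fin])
    also have "\<dots> = (\<Sum>v\<in>X0. (if - v \<notin> X0 then u (- v) else 0) *\<^sub>R (- v))"
      by (rule sum.cong) auto
    finally show ?thesis .
  qed
  have sWu: "sum u W = (\<Sum>v\<in>X0. (if - v \<notin> X0 then u (- v) else 0))"
  proof -
    have "sum u W = (\<Sum>v\<in>P. u (- v))"
      unfolding W_def using sum.reindex[OF injP, of u] by simp
    also have "\<dots> = (\<Sum>v\<in>X0. (if - v \<notin> X0 then u (- v) else 0))"
      unfolding P_def using fin by (simp add: sum.inter_filter[symmetric])
    finally show ?thesis .
  qed
  have "y = (\<Sum>x\<in>X0. u x *\<^sub>R x) + (\<Sum>x\<in>W. u x *\<^sub>R x)"
    using uy VW disj fin finW by (simp add: sum.union_disjoint)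
  also have "\<dots> = (\<Sum>v\<in>X0. c v *\<^sub>R v)"
    unfolding sW c_def by (simp add: sum.distrib[symmetric] algebra_simps sum_subtractf)
  finally have e1: "y = (\<Sum>v\<in>X0. c v *\<^sub>R v)" .
  have "(\<Sum>v\<in>X0. \<bar>c v\<bar>) \<le> (\<Sum>v\<in>X0. u v + (if - v \<notin> X0 then u (- v) else 0))"
  proof (rule sum_mono)
    fix v assume v: "v \<in> X0"
    have "0 \<le> u v" using u0 v by auto
    moreover have "- v \<notin> X0 \<Longrightarrow> 0 \<le> u (- v)" using u0 v by auto
    ultimately show "\<bar>c v\<bar> \<le> u v + (if - v \<notin> X0 then u (- v) else 0)"
      unfolding c_def by auto
  qed
  also have "\<dots> = sum u X0 + sum u W" by (simp add: sum.distrib sWu)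
  also have "\<dots> = sum u ?V" using VW disj fin finW by (simp add: sum.union_disjoint)
  finally show ?thesis using e1 u1 by auto
qed

lemma inball_hull:
  fixes V :: "'a::euclidean_space set"
  assumes finV: "finite V" and m: "m > 0"
    and cov: "\<forall>w\<in>sphere 0 1. \<exists>v\<in>V. m \<le> v \<bullet> w" and y: "norm y \<le> m"
  shows "y \<in> convex hull V"
proof (rule ccontr)
  assume ny: "y \<notin> convex hull V"
  have "convex (convex hull V)" by simp
  moreover have "closed (convex hull V)"
    using compact_convex_hull[OF finite_imp_compact[OF finV]] compact_imp_closed by blast
  ultimately obtain a b where ab: "a \<bullet> y < b" and ax: "\<forall>x\<in>convex hull V. b < a \<bullet> x"
    using separating_hyperplane_closed_point ny by blast
  have a0: "a \<noteq> 0"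
  proof
    assume "a = 0"
    then have "0 < b" using ab by simp
    obtain e :: 'a where "e \<in> Basis" using nonempty_Basis by blast
    then have "e \<in> sphere 0 1" by simp
    then obtain v where "v \<in> V" using cov by blast
    then have "v \<in> convex hull V" by (simp add: hull_inc)
    then show False using ax \<open>a = 0\<close> \<open>0 < b\<close> by fastforce
  qed
  define w where "w = - (inverse (norm a)) *\<^sub>R a"
  have "w \<in> sphere 0 1" unfolding w_def using a0 by simp
  then obtain v where v: "v \<in> V" "m \<le> v \<bullet> w" using cov by blast
  have "v \<bullet> w = - (v \<bullet> a) / norm a" unfolding w_def by (simp add: field_simps)
  then have "norm a * (v \<bullet> w) = - (a \<bullet> v)" using a0 by (simp add: field_simps inner_commute)
  then have "m * norm a \<le> - (a \<bullet> v)" using mult_right_mono[OF v(2) norm_ge_zero[of a]] by (simp add: mult.commute)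
  moreover have "- (a \<bullet> y) \<le> norm a * norm y"
    using Cauchy_Schwarz_ineq2[of a y] by linarith
  moreover have "norm a * norm y \<le> norm a * m" using y by (simp add: mult_left_mono)
  moreover have "b < a \<bullet> v" using ax v(1) by (simp add: hull_inc)
  ultimately show False using ab by (simp add: mult.commute)
qed

theorem lemma5:
  fixes X0 :: "'a::euclidean_space set"
  assumes "finite X0" and "X0 \<noteq> {}" and "X0 \<subseteq> sphere 0 1"
  shows "F_inf X0 = inv_ereal (cos (covering_radius (X0 \<union> uminus ` X0)))"
proof -
  define V where "V = X0 \<union> uminus ` X0"
  have finV: "finite V" and neV: "V \<noteq> {}" using assms unfolding V_def by auto
  have Vs: "V \<subseteq> sphere 0 1" using assms(3) unfolding V_def by auto
  have Vneg: "\<And>v. v \<in> V \<Longrightarrow> - v \<in> V" unfolding V_def by auto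
  define h where "h w = Max ((\<lambda>v. v \<bullet> w) ` V)" for w :: 'a
  have h_ge: "\<And>v w. v \<in> V \<Longrightarrow> v \<bullet> w \<le> h w" unfolding h_def using finV by simp
  have h_in: "\<exists>v\<in>V. h w = v \<bullet> w" for w
  proof -
    have "h w \<in> (\<lambda>v. v \<bullet> w) ` V" unfolding h_def using finV neV by (intro Max_in) auto
    then show ?thesis by auto
  qed
  have h_abs: "\<And>v w. v \<in> V \<Longrightarrow> \<bar>v \<bullet> w\<bar> \<le> h w"
  proof -
    fix v w assume "v \<in> V"
    then have "v \<bullet> w \<le> h w" "(- v) \<bullet> w \<le> h w" using h_ge Vneg by blast+
    then show "\<bar>v \<bullet> w\<bar> \<le> h w" by simp
  qed
  have ip1: "\<And>v w :: 'a. v \<in> V \<Longrightarrow> w \<in> sphere 0 1 \<Longrightarrow> \<bar>v \<bullet> w\<bar> \<le> 1"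
  proof -
    fix v w :: 'a assume "v \<in> V" "w \<in> sphere 0 1"
    then have "norm v = 1" "norm w = 1" using Vs by auto
    then show "\<bar>v \<bullet> w\<bar> \<le> 1" using Cauchy_Schwarz_ineq2[of v w] by simp
  qed
  have h_le1: "h w \<le> 1" if w: "w \<in> sphere 0 1" for w
  proof -
    obtain v where v: "v \<in> V" "h w = v \<bullet> w" using h_in by blast
    show ?thesis using ip1[OF v(1) w] v(2) by linarith
  qed
  have h_nn: "0 \<le> h w" for w
  proof -
    obtain v where "v \<in> V" using neV by blast
    from h_abs[OF this, of w] show ?thesis by linarith
  qed
  have lip: "\<And>w w'. h w - h w' \<le> norm (w - w')"
  proof -
    fix w w'
    obtain v where v: "v \<in> V" "h w = v \<bullet> w" using h_in by blast
    have "v \<bullet> w' \<le> h w'" using h_ge v by blast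
    moreover have "v \<bullet> (w - w') \<le> norm v * norm (w - w')" using Cauchy_Schwarz_ineq2[of v "w - w'"] by linarith
    moreover have "norm v = 1" using v Vs by auto
    ultimately show "h w - h w' \<le> norm (w - w')" using v by (simp add: inner_diff_right)
  qed
  have hcont: "continuous_on (sphere 0 1) h"
    unfolding continuous_on_iff
  proof (intro ballI allI impI)
    fix x e assume "x \<in> sphere (0::'a) 1" "(0::real) < e"
    show "\<exists>d>0. \<forall>x'\<in>sphere (0::'a) 1. dist x' x < d \<longrightarrow> dist (h x') (h x) < e"
    proof (intro exI[of _ e] conjI ballI impI)
      fix x' assume "dist x' x < e"
      moreover have "\<bar>h x' - h x\<bar> \<le> norm (x' - x)" using lip[of x' x] lip[of x x']
        by (simp add: norm_minus_commute)
      ultimately show "dist (h x') (h x) < e" by (simp add: dist_norm dist_real_def)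
    qed (use \<open>0 < e\<close> in auto)
  qed
  obtain b :: 'a where "b \<in> Basis" using nonempty_Basis by blast
  then have "b \<in> sphere (0::'a) 1" by simp
  then have sne: "sphere (0::'a) 1 \<noteq> {}" by blast
  obtain w0 where w0: "w0 \<in> sphere 0 1" and w0min: "\<And>w. w \<in> sphere 0 1 \<Longrightarrow> h w0 \<le> h w"
    using continuous_attains_inf[OF compact_sphere sne hcont] by blast
  define m where "m = h w0"
  have m01: "0 \<le> m" "m \<le> 1" unfolding m_def using h_nn h_le1 w0 by auto
  have minA: "\<And>w. w \<in> sphere 0 1 \<Longrightarrow> Min ((\<lambda>v. arccos (v \<bullet> w)) ` V) = arccos (h w)"
  proof -
    fix w :: 'a assume w: "w \<in> sphere 0 1"
    show "Min ((\<lambda>v. arccos (v \<bullet> w)) ` V) = arccos (h w)"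
    proof (rule Min_eqI)
      show "finite ((\<lambda>v. arccos (v \<bullet> w)) ` V)" using finV by simp
      obtain v0 where v0: "v0 \<in> V" "h w = v0 \<bullet> w" using h_in by blast
      show "arccos (h w) \<in> (\<lambda>v. arccos (v \<bullet> w)) ` V" using v0 by (intro image_eqI[OF _ v0(1)]) simp
      fix y assume "y \<in> (\<lambda>v. arccos (v \<bullet> w)) ` V"
      then obtain v where v: "v \<in> V" "y = arccos (v \<bullet> w)" by blast
      have "-1 \<le> v \<bullet> w" "v \<bullet> w \<le> h w" "h w \<le> 1" using ip1[OF v(1) w] h_ge[OF v(1)] h_le1[OF w] by auto
      then show "arccos (h w) \<le> y" using v(2) by (simp add: arccos_le_arccos)
    qed
  qed
  have cr: "covering_radius V = arccos m"
    unfolding covering_radius_def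
  proof (rule cSup_eq_maximum)
    show "arccos m \<in> (\<lambda>w. Min ((\<lambda>v. arccos (v \<bullet> w)) ` V)) ` sphere 0 1"
    proof (rule image_eqI[OF _ w0])
      show "arccos m = Min ((\<lambda>v. arccos (v \<bullet> w0)) ` V)" using minA[OF w0] unfolding m_def by simp
    qed
    fix x assume "x \<in> (\<lambda>w. Min ((\<lambda>v. arccos (v \<bullet> w)) ` V)) ` sphere 0 1"
    then obtain w where w: "w \<in> sphere 0 1" "x = Min ((\<lambda>v. arccos (v \<bullet> w)) ` V)" by blast
    have "m \<le> h w" "h w \<le> 1" using w0min[OF w(1)] h_le1[OF w(1)] unfolding m_def by auto
    then show "x \<le> arccos m" using w minA m01 by (simp add: arccos_le_arccos)
  qed
  have cm: "cos (covering_radius V) = m" using cr m01 by simp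
  have absm: "\<And>v. v \<in> X0 \<Longrightarrow> \<bar>v \<bullet> w0\<bar> \<le> m" unfolding m_def using h_abs V_def by blast
  have w0w0: "w0 \<bullet> w0 = 1" using w0 by (simp add: inner_same_Basis norm_eq_1)
  have expand: "\<And>c. w0 = (\<Sum>v\<in>X0. c v *\<^sub>R v) \<Longrightarrow> 1 \<le> (\<Sum>v\<in>X0. \<bar>c v\<bar>) * m"
  proof -
    fix c assume e: "w0 = (\<Sum>v\<in>X0. c v *\<^sub>R v)"
    have "1 = (\<Sum>v\<in>X0. c v *\<^sub>R v) \<bullet> w0" using e w0w0 by simp
    also have "\<dots> = (\<Sum>v\<in>X0. c v * (v \<bullet> w0))" by (simp add: inner_sum_left)
    also have "\<dots> \<le> (\<Sum>v\<in>X0. \<bar>c v\<bar> * m)"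
    proof (rule sum_mono)
      fix v assume "v \<in> X0"
      then have "\<bar>v \<bullet> w0\<bar> \<le> m" by (rule absm)
      then have "\<bar>c v * (v \<bullet> w0)\<bar> \<le> \<bar>c v\<bar> * m" by (simp add: abs_mult mult_left_mono)
      then show "c v * (v \<bullet> w0) \<le> \<bar>c v\<bar> * m" by linarith
    qed
    also have "\<dots> = (\<Sum>v\<in>X0. \<bar>c v\<bar>) * m" by (simp add: sum_distrib_right)
    finally show "1 \<le> (\<Sum>v\<in>X0. \<bar>c v\<bar>) * m" .
  qed
  show ?thesis
  proof (cases "m = 0")
    case True
    have "f_inf w0 X0 = \<infinity>"
    proof -
      have "{ereal (\<Sum>v\<in>X0. \<bar>c v\<bar>) | c :: 'a \<Rightarrow> real. w0 = (\<Sum>v\<in>X0. c v *\<^sub>R v)} = {}"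
        using expand True by fastforce
      then show ?thesis unfolding f_inf_def by (simp add: top_ereal_def)
    qed
    moreover have "f_inf w0 X0 \<le> F_inf X0" unfolding F_inf_def using w0 by (rule SUP_upper)
    ultimately have "F_inf X0 = \<infinity>" by simp
    then show ?thesis using cm True V_def inv_ereal_def by simp
  next
    case False
    then have mpos: "m > 0" using m01 by simp
    have "F_inf X0 \<le> ereal (1 / m)"
      unfolding F_inf_def
    proof (rule SUP_least)
      fix x :: 'a assume x: "x \<in> sphere 0 1"
      have "m *\<^sub>R x \<in> convex hull V"
      proof (rule inball_hull[OF finV mpos])
        show "\<forall>w\<in>sphere 0 1. \<exists>v\<in>V. m \<le> v \<bullet> w"
        proof
          fix w :: 'a assume w: "w \<in> sphere 0 1"
          obtain v where "v \<in> V" "h w = v \<bullet> w" using h_in by blast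
          then show "\<exists>v\<in>V. m \<le> v \<bullet> w" using w0min[OF w] unfolding m_def by auto
        qed
        show "norm (m *\<^sub>R x) \<le> m" using x m01 by simp
      qed
      then obtain c where c: "m *\<^sub>R x = (\<Sum>v\<in>X0. c v *\<^sub>R v)" "(\<Sum>v\<in>X0. \<bar>c v\<bar>) \<le> 1"
        using repr_hull[OF assms(1)] V_def by blast
      define c' where "c' v = c v / m" for v
      have "x = (\<Sum>v\<in>X0. c' v *\<^sub>R v)"
      proof -
        have "x = inverse m *\<^sub>R (m *\<^sub>R x)" using mpos by simp
        also have "\<dots> = (\<Sum>v\<in>X0. c' v *\<^sub>R v)" unfolding c(1) c'_def
          by (simp add: scaleR_sum_right divide_inverse mult.commute)
        finally show ?thesis .
      qed
      then have "f_inf x X0 \<le> ereal (\<Sum>v\<in>X0. \<bar>c' v\<bar>)"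
        unfolding f_inf_def by (intro Inf_lower) blast
      also have "(\<Sum>v\<in>X0. \<bar>c' v\<bar>) = (\<Sum>v\<in>X0. \<bar>c v\<bar>) / m"
        unfolding c'_def using mpos by (simp add: sum_divide_distrib)
      also have "\<dots> \<le> 1 / m" using c(2) mpos by (simp add: divide_right_mono)
      finally show "f_inf x X0 \<le> ereal (1 / m)" by simp
    qed
    moreover have "ereal (1 / m) \<le> F_inf X0"
    proof -
      have "ereal (1 / m) \<le> f_inf w0 X0"
        unfolding f_inf_def
      proof (rule Inf_greatest)
        fix z assume "z \<in> {ereal (\<Sum>v\<in>X0. \<bar>c v\<bar>) | c :: 'a \<Rightarrow> real. w0 = (\<Sum>v\<in>X0. c v *\<^sub>R v)}"
        then obtain c where "z = ereal (\<Sum>v\<in>X0. \<bar>c v\<bar>)" "w0 = (\<Sum>v\<in>X0. c v *\<^sub>R v)" by blast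
        then show "ereal (1 / m) \<le> z" using expand mpos by (simp add: divide_le_eq)
      qed
      also have "\<dots> \<le> F_inf X0" unfolding F_inf_def using w0 by (rule SUP_upper)
      finally show ?thesis .
    qed
    ultimately have "F_inf X0 = ereal (1 / m)" by (rule antisym)
    then show ?thesis using cm False V_def inv_ereal_def by simp
  qed
qed

end
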